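(* Let $\mathcal G=(V,E)$ be a constraint graph over $(\mathbb F,S)$ and let $W$ be a weight on $\mathcal G$ with finite support (i.e. only finitely many vertices and edges have nonzero weight; e.g. $\mathcal G$ finite). If $W(v_1)>0$ for some $v_1\in V$, then there exists a periodic treequence $x\in X_{\mathcal G}$ with $x(\mathrm{id})=v_1$.
   Context: $\mathbb F$ is a finitely generated free group with symmetric free generating set $S=B\cup B^{-1}$, $B$ a free basis. A constraint graph is $\mathcal G=(V,E)$ with $E\subset V\times V\times S$, $(v,w;s)$ denoting the directed edge from $v$ to $w$ labeled $s$. The graph subshift $X_{\mathcal G}\subset V^{\mathbb F}$ is the set of $x:\mathbb F\to V$ with $(x(f),x(fs);s)\in E$ for all $f,s$; shifts act by $(\sigma_gx)(f)=x(g^{-1}f)$, and $x$ is periodic if $\{f:\sigma_fx=x\}$ has finite index in $\mathbb F$. A weight on $\mathcal G$ is $W:V\cup E\to[0,\infty)$ (with $W(v,w;s)=0$ for $(v,w;s)\notin E$) such that for all $v\in V,s\in S$: $W(v)=\sum_{w}W(v,w;s)=\sum_wW(w,v;s)$, and $W(v,w;s)=W(w,v;s^{-1})$ for all $v,w,s$. *)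

theory Defs
  imports "HOL-Analysis.Analysis" "HOL-Algebra.Coset"
begin

text \<open>A letter (b, True) stands for the generator b, (b, False) for its inverse.\<close>
type_synonym 'b letter = "'b \<times> bool"
type_synonym 'b word = "'b letter list"

definition inv_letter :: "'b letter \<Rightarrow> 'b letter" where
  "inv_letter a = (fst a, \<not> snd a)"

definition gens :: "'b set \<Rightarrow> 'b letter set" where
  "gens B = B \<times> UNIV"

fun reduced :: "'b word \<Rightarrow> bool" where
  "reduced [] = True"
| "reduced [a] = True"
| "reduced (a # b # w) = (b \<noteq> inv_letter a \<and> reduced (b # w))"

fun push :: "'b letter \<Rightarrow> 'b word \<Rightarrow> 'b word" where
  "push a [] = [a]"
| "push a (b # w) = (if b = inv_letter a then w else a # b # w)"

definition reduce :: "'b word \<Rightarrow> 'b word" where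
  "reduce w = foldr push w []"

definition fg_mult :: "'b word \<Rightarrow> 'b word \<Rightarrow> 'b word" where
  "fg_mult u v = reduce (u @ v)"

definition fg_inv :: "'b word \<Rightarrow> 'b word" where
  "fg_inv w = rev (map inv_letter w)"

definition free_group :: "'b set \<Rightarrow> 'b word monoid" where
  "free_group B = \<lparr> carrier = {w. reduced w \<and> set w \<subseteq> gens B},
                    mult = fg_mult, one = [] \<rparr>"

definition constraint_graph :: "'b set \<Rightarrow> 'v set \<Rightarrow> ('v \<times> 'v \<times> 'b letter) set \<Rightarrow> bool" where
  "constraint_graph B V E \<longleftrightarrow> E \<subseteq> V \<times> V \<times> gens B"

definition graph_subshift ::
  "'b set \<Rightarrow> 'v set \<Rightarrow> ('v \<times> 'v \<times> 'b letter) set \<Rightarrow> ('b word \<Rightarrow> 'v) set" where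
  "graph_subshift B V E =
     {x. (\<forall>f \<in> carrier (free_group B). x f \<in> V) \<and>
         (\<forall>f \<in> carrier (free_group B). \<forall>s \<in> gens B. (x f, x (fg_mult f [s]), s) \<in> E)}"

definition shift :: "'b word \<Rightarrow> ('b word \<Rightarrow> 'v) \<Rightarrow> ('b word \<Rightarrow> 'v)" where
  "shift g x = (\<lambda>f. x (fg_mult (fg_inv g) f))"

definition stabilizer :: "'b set \<Rightarrow> ('b word \<Rightarrow> 'v) \<Rightarrow> 'b word set" where
  "stabilizer B x = {f \<in> carrier (free_group B).
                      \<forall>h \<in> carrier (free_group B). shift f x h = x h}"

definition periodic :: "'b set \<Rightarrow> ('b word \<Rightarrow> 'v) \<Rightarrow> bool" where
  "periodic B x \<longleftrightarrow> finite (rcosets\<^bsub>free_group B\<^esub> (stabilizer B x))"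

definition is_weight ::
  "'b set \<Rightarrow> 'v set \<Rightarrow> ('v \<times> 'v \<times> 'b letter) set \<Rightarrow>
   ('v \<Rightarrow> real) \<Rightarrow> ('v \<Rightarrow> 'v \<Rightarrow> 'b letter \<Rightarrow> real) \<Rightarrow> bool" where
  "is_weight B V E WV WE \<longleftrightarrow>
     (\<forall>v \<in> V. WV v \<ge> 0) \<and>
     (\<forall>v w s. WE v w s \<ge> 0) \<and>
     (\<forall>v w s. (v, w, s) \<notin> E \<longrightarrow> WE v w s = 0) \<and>
     (\<forall>v \<in> V. \<forall>s \<in> gens B.
        WV v = (\<Sum>\<^sub>\<infinity>w \<in> V. WE v w s) \<and> WV v = (\<Sum>\<^sub>\<infinity>w \<in> V. WE w v s)) \<and>
     (\<forall>v w. \<forall>s \<in> gens B. WE v w s = WE w v (inv_letter s))"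

definition finite_support ::
  "'v set \<Rightarrow> ('v \<Rightarrow> real) \<Rightarrow> ('v \<Rightarrow> 'v \<Rightarrow> 'b letter \<Rightarrow> real) \<Rightarrow> bool" where
  "finite_support V WV WE \<longleftrightarrow>
     finite {v \<in> V. WV v \<noteq> 0} \<and> finite {(v, w, s). WE v w s \<noteq> 0}"

end

theory Submission
  imports Defs
begin


lemma push_cancel:
  assumes "reduced s" shows "push a (push (inv_letter a) s) = s"
proof (cases s)
  case Nil then show ?thesis by (simp add: inv_letter_def)
next
  case (Cons d s')
  show ?thesis
  proof (cases "d = a")
    case True
    then show ?thesis using Cons assms
      by (cases s') (auto simp: inv_letter_def)
  next
    case False
    then show ?thesis using Cons by (auto simp: inv_letter_def prod_eq_iff)
  qed
qed

lemma inv_inv[simp]: "inv_letter (inv_letter a) = a"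
  by (simp add: inv_letter_def)

lemma reduced_tl: "reduced (a # w) \<Longrightarrow> reduced w"
  by (cases w) auto

lemma reduced_push: "reduced w \<Longrightarrow> reduced (push a w)"
  by (cases w) (auto dest: reduced_tl)

lemma reduced_foldr: "reduced r \<Longrightarrow> reduced (foldr push u r)"
  by (induction u) (auto intro: reduced_push)

lemma reduced_reduce: "reduced (reduce w)"
  unfolding reduce_def by (rule reduced_foldr) simp

lemma set_push: "set (push a w) \<subseteq> insert a (set w)"
  by (cases w) auto

lemma set_foldr: "set (foldr push u r) \<subseteq> set u \<union> set r"
  by (induction u) (use set_push in fastforce)+

lemma set_reduce: "set (reduce w) \<subseteq> set w"
  unfolding reduce_def using set_foldr[of w "[]"] by simp

lemma reduce_Cons: "reduce (a # w) = push a (reduce w)"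
  by (simp add: reduce_def)

lemma reduce_append: "reduce (u @ v) = foldr push u (reduce v)"
  by (simp add: reduce_def)

lemma reduce_reduced: "reduced w \<Longrightarrow> reduce w = w"
proof (induction w)
  case Nil then show ?case by (simp add: reduce_def)
next
  case (Cons a w)
  then have "reduce w = w" by (auto dest: reduced_tl)
  then show ?case using Cons.prems by (cases w) (auto simp: reduce_Cons)
qed

lemma foldr_reduce: "reduced r \<Longrightarrow> foldr push (reduce u) r = foldr push u r"
proof (induction u)
  case Nil then show ?case by (simp add: reduce_def)
next
  case (Cons a u)
  show ?case
  proof (cases "\<exists>t. reduce u = inv_letter a # t")
    case True
    then obtain t where t: "reduce u = inv_letter a # t" by blast
    have "foldr push (a # u) r = push a (foldr push (reduce u) r)" using Cons by simp
    also have "\<dots> = push a (push (inv_letter a) (foldr push t r))" by (simp add: t)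
    also have "\<dots> = foldr push t r" by (rule push_cancel, rule reduced_foldr, rule Cons.prems)
    finally show ?thesis by (simp add: reduce_Cons t)
  next
    case False
    then have "push a (reduce u) = a # reduce u"
      by (cases "reduce u") auto
    then show ?thesis using Cons by (simp add: reduce_Cons)
  qed
qed

lemma fg_inv_Cons: "fg_inv (a # w) = fg_inv w @ [inv_letter a]"
  by (simp add: fg_inv_def)

lemma fg_inv_fg_inv[simp]: "fg_inv (fg_inv w) = w"
  by (simp add: fg_inv_def rev_map comp_def)

lemma foldr_inv_cancel: "reduced r \<Longrightarrow> foldr push (fg_inv w) (foldr push w r) = r"
proof (induction w)
  case Nil then show ?case by (simp add: fg_inv_def)
next
  case (Cons c w)
  have "foldr push (fg_inv (c # w)) (foldr push (c # w) r)
      = foldr push (fg_inv w) (push (inv_letter c) (push (inv_letter (inv_letter c)) (foldr push w r)))"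
    by (simp add: fg_inv_Cons)
  also have "\<dots> = foldr push (fg_inv w) (foldr push w r)"
    by (subst push_cancel) (auto intro: reduced_foldr Cons.prems)
  finally show ?case using Cons by simp
qed

lemma mult_cancel:
  assumes "reduced a'"
  shows "fg_mult (fg_mult (fg_mult h a) (fg_inv a')) a' = fg_mult h a"
proof -
  have "fg_mult (fg_mult (fg_mult h a) (fg_inv a')) a'
      = foldr push (reduce (reduce (h @ a) @ fg_inv a')) (reduce a')"
    by (simp add: fg_mult_def reduce_append)
  also have "\<dots> = foldr push (reduce (h @ a) @ fg_inv a') a'"
    using assms by (simp add: reduce_reduced foldr_reduce)
  also have "\<dots> = foldr push (reduce (h @ a)) (foldr push (fg_inv a') (foldr push a' []))"
    using assms by (simp add: reduce_def[symmetric] reduce_reduced)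
  also have "\<dots> = foldr push (reduce (h @ a)) []"
    by (subst foldr_inv_cancel) auto
  also have "\<dots> = fg_mult h a"
    by (simp add: fg_mult_def reduce_def[symmetric] reduce_reduced reduced_reduce)
  finally show ?thesis .
qed

definition stp :: "('b \<Rightarrow> 'o \<Rightarrow> 'o) \<Rightarrow> 'o set \<Rightarrow> 'b letter \<Rightarrow> 'o \<Rightarrow> 'o" where
  "stp \<pi> \<Omega> s = (if snd s then \<pi> (fst s) else inv_into \<Omega> (\<pi> (fst s)))"

definition act :: "('b \<Rightarrow> 'o \<Rightarrow> 'o) \<Rightarrow> 'o set \<Rightarrow> 'o \<Rightarrow> 'b word \<Rightarrow> 'o" where
  "act \<pi> \<Omega> \<omega> w = foldl (\<lambda>\<omega> s. stp \<pi> \<Omega> s \<omega>) \<omega> w"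

locale perms =
  fixes \<pi> :: "'b \<Rightarrow> 'o \<Rightarrow> 'o" and \<Omega> :: "'o set"
  assumes bij: "\<And>b. bij_betw (\<pi> b) \<Omega> \<Omega>"
begin

lemma stp_in: "\<omega> \<in> \<Omega> \<Longrightarrow> stp \<pi> \<Omega> s \<omega> \<in> \<Omega>"
  using bij[of "fst s"]
  by (auto simp: stp_def bij_betw_def intro: inv_into_into)

lemma stp_cancel: "\<omega> \<in> \<Omega> \<Longrightarrow> stp \<pi> \<Omega> (inv_letter s) (stp \<pi> \<Omega> s \<omega>) = \<omega>"
  using bij[of "fst s"]
  by (auto simp: stp_def inv_letter_def bij_betw_def inv_into_f_f f_inv_into_f)

lemma act_Cons[simp]: "act \<pi> \<Omega> \<omega> (a # w) = act \<pi> \<Omega> (stp \<pi> \<Omega> a \<omega>) w"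
  by (simp add: act_def)

lemma act_Nil[simp]: "act \<pi> \<Omega> \<omega> [] = \<omega>"
  by (simp add: act_def)

lemma act_append: "act \<pi> \<Omega> \<omega> (u @ v) = act \<pi> \<Omega> (act \<pi> \<Omega> \<omega> u) v"
  by (simp add: act_def)

lemma act_in: "\<omega> \<in> \<Omega> \<Longrightarrow> act \<pi> \<Omega> \<omega> w \<in> \<Omega>"
  by (induction w arbitrary: \<omega>) (auto intro: stp_in)

lemma act_push: "\<omega> \<in> \<Omega> \<Longrightarrow> act \<pi> \<Omega> \<omega> (push a w) = act \<pi> \<Omega> \<omega> (a # w)"
  by (cases w) (auto simp: stp_cancel[of \<omega> a, simplified] dest: sym)

lemma act_reduce: "\<omega> \<in> \<Omega> \<Longrightarrow> act \<pi> \<Omega> \<omega> (reduce w) = act \<pi> \<Omega> \<omega> w"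
  by (induction w arbitrary: \<omega>) (auto simp: reduce_Cons act_push stp_in reduce_def)

lemma act_inv: "\<omega> \<in> \<Omega> \<Longrightarrow> act \<pi> \<Omega> (act \<pi> \<Omega> \<omega> w) (fg_inv w) = \<omega>"
  by (induction w arbitrary: \<omega>) (auto simp: fg_inv_Cons act_append stp_in stp_cancel fg_inv_def)

lemma act_inv2: "\<omega> \<in> \<Omega> \<Longrightarrow> act \<pi> \<Omega> (act \<pi> \<Omega> \<omega> (fg_inv w)) w = \<omega>"
  using act_inv[of \<omega> "fg_inv w"] by simp

lemma act_inv_reduce: "\<omega> \<in> \<Omega> \<Longrightarrow> act \<pi> \<Omega> \<omega> (fg_inv (reduce z)) = act \<pi> \<Omega> \<omega> (fg_inv z)"
proof -
  assume w: "\<omega> \<in> \<Omega>"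
  let ?a = "act \<pi> \<Omega> \<omega> (fg_inv (reduce z))" and ?b = "act \<pi> \<Omega> \<omega> (fg_inv z)"
  have "act \<pi> \<Omega> ?a z = \<omega>" using act_inv2[OF w, of "reduce z"] act_reduce act_in w by metis
  moreover have "act \<pi> \<Omega> ?b z = \<omega>" using act_inv2[OF w] .
  ultimately have "act \<pi> \<Omega> (act \<pi> \<Omega> ?a z) (fg_inv z) = act \<pi> \<Omega> (act \<pi> \<Omega> ?b z) (fg_inv z)" by simp
  then show ?thesis using act_inv act_in w by metis
qed

end


lemma rat_approx_n:
  fixes x :: "'i \<Rightarrow> real"
  assumes "finite I"
  shows "length eqs = n \<Longrightarrow> (\<forall>c\<in>set eqs. \<forall>i. c i \<in> \<rat>) \<Longrightarrow> (\<forall>c\<in>set eqs. (\<Sum>i\<in>I. c i * x i) = 0) \<Longrightarrow> \<epsilon> > 0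
    \<Longrightarrow> \<exists>y. (\<forall>i. y i \<in> \<rat>) \<and> (\<forall>c\<in>set eqs. (\<Sum>i\<in>I. c i * y i) = 0) \<and> (\<forall>i\<in>I. \<bar>y i - x i\<bar> < \<epsilon>)"
proof (induction n arbitrary: eqs x \<epsilon>)
  case 0
  have "\<forall>i. \<exists>r. r \<in> \<rat> \<and> x i - \<epsilon> < r \<and> r < x i + \<epsilon>"
  proof
    fix i show "\<exists>r. r \<in> \<rat> \<and> x i - \<epsilon> < r \<and> r < x i + \<epsilon>"
      using Rats_dense_in_real[of "x i - \<epsilon>" "x i + \<epsilon>"] 0 by auto
  qed
  then obtain y where y: "\<And>i. y i \<in> \<rat> \<and> x i - \<epsilon> < y i \<and> y i < x i + \<epsilon>" by metis
  show ?case using 0 y by (intro exI[of _ y]) (auto simp: abs_less_iff dest: spec[of _ y] | smt (verit) y)+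
next
  case (Suc n)
  then obtain c cs where eqs: "eqs = c # cs" and len: "length cs = n" by (cases eqs) auto
  show ?case
  proof (cases "\<forall>i\<in>I. c i = 0")
    case True
    obtain y where y: "\<forall>i. y i \<in> \<rat>" "\<forall>c\<in>set cs. (\<Sum>i\<in>I. c i * y i) = 0" "\<forall>i\<in>I. \<bar>y i - x i\<bar> < \<epsilon>"
      using Suc.IH[OF len, of x \<epsilon>] Suc.prems eqs by auto
    then show ?thesis using True eqs by (intro exI[of _ y]) auto
  next
    case False
    then obtain j where j: "j \<in> I" "c j \<noteq> 0" by blast
    define sub where "sub e = (\<lambda>i. e i - e j / c j * c i)" for e :: "'i \<Rightarrow> real"
    have cR: "\<forall>i. c i \<in> \<rat>" using Suc.prems eqs by auto
    have subR: "\<forall>i. sub e i \<in> \<rat>" if "\<forall>i. e i \<in> \<rat>" for e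
      using that cR by (auto simp: sub_def intro!: Rats_diff Rats_mult Rats_divide)
    have subsum: "(\<Sum>i\<in>I. sub e i * z i) = (\<Sum>i\<in>I. e i * z i) - e j / c j * (\<Sum>i\<in>I. c i * z i)" for e z
      by (simp add: sub_def algebra_simps sum_subtractf sum_distrib_left)
    have subj: "sub e j = 0" for e using j by (simp add: sub_def)
    define K where "K = (\<Sum>i\<in>I. \<bar>c i / c j\<bar>)"
    have K0: "K \<ge> 0" unfolding K_def by (simp add: sum_nonneg)
    define \<epsilon>' where "\<epsilon>' = \<epsilon> / (1 + K)"
    have e'pos: "\<epsilon>' > 0" using K0 Suc.prems by (simp add: \<epsilon>'_def)
    have e'le: "\<epsilon>' \<le> \<epsilon>" using K0 Suc.prems by (simp add: \<epsilon>'_def field_simps)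
    have Ke': "K * \<epsilon>' < \<epsilon>" using K0 Suc.prems by (simp add: \<epsilon>'_def field_simps)
    have cx: "(\<Sum>i\<in>I. c i * x i) = 0" using Suc.prems eqs by auto
    obtain y' where y': "\<forall>i. y' i \<in> \<rat>" "\<forall>e\<in>set (map sub cs). (\<Sum>i\<in>I. e i * y' i) = 0"
      "\<forall>i\<in>I. \<bar>y' i - x i\<bar> < \<epsilon>'"
      using Suc.IH[of "map sub cs" x \<epsilon>'] len Suc.prems eqs subR subsum cx e'pos by auto
    define y where "y = y'(j := - (\<Sum>i\<in>I-{j}. c i * y' i) / c j)"
    have sumsplit: "(\<Sum>i\<in>I. f i) = f j + (\<Sum>i\<in>I-{j}. f i)" for f :: "'i \<Rightarrow> real"
      using j(1) Suc.prems(1) assms by (simp add: sum.remove)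
    have cy: "(\<Sum>i\<in>I. c i * y i) = 0"
      using j(2) by (subst sumsplit) (simp add: y_def)
    have yR: "\<forall>i. y i \<in> \<rat>"
      using y'(1) cR by (auto simp: y_def intro!: Rats_divide Rats_sum Rats_mult)
    have eqy: "(\<Sum>i\<in>I. e i * y i) = 0" if "e \<in> set cs" for e
    proof -
      have "(\<Sum>i\<in>I. e i * y i) = (\<Sum>i\<in>I. sub e i * y i)" using subsum[of e y] cy by simp
      also have "\<dots> = (\<Sum>i\<in>I. sub e i * y' i)"
        by (rule sum.cong) (auto simp: y_def subj)
      also have "\<dots> = 0" using y'(2) that by auto
      finally show ?thesis .
    qed
    have close: "\<bar>y i - x i\<bar> < \<epsilon>" if "i \<in> I" for i
    proof (cases "i = j")
      case False
      then show ?thesis using y'(3) that e'le by (auto simp: y_def)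
    next
      case True
      have xj: "x j = - (\<Sum>i\<in>I-{j}. c i * x i) / c j"
        using cx j(2) by (subst (asm) sumsplit) (simp add: field_simps)
      have "y j - x j = - (\<Sum>i\<in>I-{j}. c i / c j * (y' i - x i))"
        using j(2) by (simp add: y_def xj field_simps sum_divide_distrib[symmetric] sum_subtractf
            sum_distrib_left)
      then have "\<bar>y j - x j\<bar> = \<bar>\<Sum>i\<in>I-{j}. c i / c j * (y' i - x i)\<bar>" by simp
      also have "\<dots> \<le> (\<Sum>i\<in>I-{j}. \<bar>c i / c j * (y' i - x i)\<bar>)" by (rule sum_abs)
      also have "\<dots> = (\<Sum>i\<in>I-{j}. \<bar>c i / c j\<bar> * \<bar>y' i - x i\<bar>)" by (simp only: abs_mult)
      also have "\<dots> \<le> (\<Sum>i\<in>I-{j}. \<bar>c i / c j\<bar> * \<epsilon>')"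
        using y'(3) by (intro sum_mono mult_left_mono) auto
      also have "\<dots> \<le> K * \<epsilon>'"
        unfolding K_def sum_distrib_right[symmetric]
        using e'pos assms by (intro mult_right_mono sum_mono2) auto
      finally show ?thesis using True Ke' by simp
    qed
    show ?thesis using yR cy eqy close eqs by (intro exI[of _ y]) auto
  qed
qed



lemma bij_fiber:
  assumes "\<And>v. v \<in> U \<Longrightarrow> bij_betw (h v) (A v) (C v)"
  shows "bij_betw (\<lambda>(v,a). (v, h v a)) (Sigma U A) (Sigma U C)"
proof -
  have inj: "inj_on (\<lambda>(v,a). (v, h v a)) (Sigma U A)"
    using assms by (auto simp: inj_on_def bij_betw_def)
  have "(\<lambda>(v,a). (v, h v a)) ` Sigma U A = Sigma U C"
  proof
    show "(\<lambda>(v,a). (v, h v a)) ` Sigma U A \<subseteq> Sigma U C"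
      using assms by (auto simp: bij_betw_def)
    show "Sigma U C \<subseteq> (\<lambda>(v,a). (v, h v a)) ` Sigma U A"
    proof
      fix p assume "p \<in> Sigma U C"
      then obtain v c where p: "p = (v,c)" "v \<in> U" "c \<in> C v" by auto
      then obtain a where "a \<in> A v" "h v a = c" using assms[of v] by (metis bij_betw_def imageE)
      then show "p \<in> (\<lambda>(v,a). (v, h v a)) ` Sigma U A" using p by (auto intro!: image_eqI[of _ _ "(v,a)"])
    qed
  qed
  then show ?thesis using inj by (simp add: bij_betw_def)
qed

lemma perm_from_counts:
  fixes U :: "'v set" and n :: "'v \<Rightarrow> nat" and N :: "'v \<Rightarrow> 'v \<Rightarrow> nat"
  assumes U: "finite U"
    and row: "\<And>v. v \<in> U \<Longrightarrow> (\<Sum>w\<in>U. N v w) = n v"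
    and col: "\<And>v. v \<in> U \<Longrightarrow> (\<Sum>w\<in>U. N w v) = n v"
  shows "\<exists>\<pi>. bij_betw \<pi> (Sigma U (\<lambda>v. {..<n v})) (Sigma U (\<lambda>v. {..<n v})) \<and>
    (\<forall>\<omega>\<in>Sigma U (\<lambda>v. {..<n v}). N (fst \<omega>) (fst (\<pi> \<omega>)) > 0)"
proof -
  define \<Omega> where "\<Omega> = Sigma U (\<lambda>v. {..<n v})"
  define T where "T = Sigma U (\<lambda>v. Sigma U (\<lambda>w. {..<N v w}))"
  define T2 where "T2 = Sigma U (\<lambda>w. Sigma U (\<lambda>v. {..<N v w}))"
  have "\<forall>v\<in>U. \<exists>h. bij_betw h (Sigma U (\<lambda>w. {..<N v w})) {..<n v}"
    using U row by (auto intro!: finite_same_card_bij)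
  then obtain h where h: "\<And>v. v \<in> U \<Longrightarrow> bij_betw (h v) (Sigma U (\<lambda>w. {..<N v w})) {..<n v}"
    by metis
  have "\<forall>w\<in>U. \<exists>h. bij_betw h (Sigma U (\<lambda>v. {..<N v w})) {..<n w}"
    using U col by (auto intro!: finite_same_card_bij)
  then obtain h2 where h2: "\<And>w. w \<in> U \<Longrightarrow> bij_betw (h2 w) (Sigma U (\<lambda>v. {..<N v w})) {..<n w}"
    by metis
  define f where "f = (\<lambda>(v,a). (v, h v a))"
  define f2 where "f2 = (\<lambda>(w,a). (w, h2 w a))"
  define sw where "sw = (\<lambda>(v::'v,w::'v,t::nat). (w,v,t))"
  have bf: "bij_betw f T \<Omega>" unfolding f_def T_def \<Omega>_def by (rule bij_fiber) (rule h)
  have bf2: "bij_betw f2 T2 \<Omega>" unfolding f2_def T2_def \<Omega>_def by (rule bij_fiber) (rule h2)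
  have bsw: "bij_betw sw T T2"
    unfolding bij_betw_def inj_on_def sw_def T_def T2_def
    by (auto simp: image_iff)
  define \<pi> where "\<pi> = f2 \<circ> sw \<circ> inv_into T f"
  have bpi: "bij_betw \<pi> \<Omega> \<Omega>"
    unfolding \<pi>_def by (rule bij_betw_trans[OF bij_betw_inv_into[OF bf] bij_betw_trans[OF bsw bf2]])
  have pos: "N (fst \<omega>) (fst (\<pi> \<omega>)) > 0" if "\<omega> \<in> \<Omega>" for \<omega>
  proof -
    have "\<omega> \<in> f ` T" using bf that by (simp add: bij_betw_def)
    then have t: "inv_into T f \<omega> \<in> T" "f (inv_into T f \<omega>) = \<omega>"
      by (auto intro: inv_into_into f_inv_into_f)
    obtain v w k where vwk: "inv_into T f \<omega> = (v,w,k)" by (cases "inv_into T f \<omega>") auto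
    have "fst \<omega> = v" using t(2) vwk by (auto simp: f_def)
    moreover have "fst (\<pi> \<omega>) = w" by (simp add: \<pi>_def vwk sw_def f2_def)
    moreover have "k < N v w" using t(1) vwk by (auto simp: T_def)
    ultimately show ?thesis by simp
  qed
  show ?thesis using bpi pos unfolding \<Omega>_def by blast
qed



lemma common_denom:
  assumes "finite I" shows "(\<forall>i\<in>I. y i \<in> \<rat>) \<Longrightarrow> \<exists>D::nat. D > 0 \<and> (\<forall>i\<in>I. real D * y i \<in> \<int>)"
  using assms
proof (induction I rule: finite_induct)
  case empty then show ?case by (intro exI[of _ 1]) auto
next
  case (insert a F)
  then obtain D where D: "D > 0" "\<forall>i\<in>F. real D * y i \<in> \<int>" by auto
  obtain p q where pq: "q > 0" "y a = of_int p / of_int q" using insert.prems Rats_cases' by blast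
  define D' where "D' = D * nat q"
  have rD': "real D' = real D * of_int q" using pq by (simp add: D'_def)
  have "real D' * y i \<in> \<int>" if "i \<in> F" for i
  proof -
    have "real D' * y i = (real D * y i) * of_int q" by (simp add: rD')
    then show ?thesis using D(2) that Ints_mult Ints_of_int by metis
  qed
  moreover have "real D' * y a \<in> \<int>" using pq by (simp add: rD')
  moreover have "D' > 0" using D pq by (simp add: D'_def)
  ultimately show ?case by (intro exI[of _ D']) auto
qed

lemma nat_floor_Ints: "(z::real) \<in> \<int> \<Longrightarrow> z \<ge> 0 \<Longrightarrow> real (nat \<lfloor>z\<rfloor>) = z"
  by (metis Ints_cases floor_of_int of_int_0_le_iff of_nat_nat)



lemma weight_facts:
  fixes B :: "'b set" and V :: "'v set" and E :: "('v \<times> 'v \<times> 'b letter) set"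
    and WV :: "'v \<Rightarrow> real" and WE :: "'v \<Rightarrow> 'v \<Rightarrow> 'b letter \<Rightarrow> real"
  assumes cg: "constraint_graph B V E"
    and w: "is_weight B V E WV WE"
    and fs: "finite_support V WV WE"
  defines "U \<equiv> {v \<in> V. WV v \<noteq> 0}"
  shows "finite U" "U \<subseteq> V" "\<And>v. v \<in> U \<Longrightarrow> WV v > 0"
    "\<And>v w s. WE v w s \<noteq> 0 \<Longrightarrow> v \<in> U \<and> w \<in> U \<and> (v,w,s) \<in> E"
    "\<And>v s. v \<in> U \<Longrightarrow> s \<in> gens B \<Longrightarrow> WV v = (\<Sum>w\<in>U. WE v w s) \<and> WV v = (\<Sum>w\<in>U. WE w v s)"
proof -
  show fU: "finite U" using fs by (simp add: U_def finite_support_def)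
  show UV: "U \<subseteq> V" by (auto simp: U_def)
  have WVnn: "\<And>v. v \<in> V \<Longrightarrow> WV v \<ge> 0" and WEnn: "\<And>v w s. WE v w s \<ge> 0"
    and WEE: "\<And>v w s. (v,w,s) \<notin> E \<Longrightarrow> WE v w s = 0"
    and rc: "\<And>v s. v \<in> V \<Longrightarrow> s \<in> gens B \<Longrightarrow>
        WV v = (\<Sum>\<^sub>\<infinity>w \<in> V. WE v w s) \<and> WV v = (\<Sum>\<^sub>\<infinity>w \<in> V. WE w v s)"
    using w unfolding is_weight_def by blast+
  show pos: "\<And>v. v \<in> U \<Longrightarrow> WV v > 0" using WVnn by (force simp: U_def)
  define S where "S = {(v, w, s). WE v w s \<noteq> 0}"
  have fS: "finite S" using fs by (simp add: S_def finite_support_def)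
  define Wf where "Wf = fst ` S \<union> (fst \<circ> snd) ` S"
  have fW: "finite Wf" using fS by (simp add: Wf_def)
  have inWf: "WE v w s \<noteq> 0 \<Longrightarrow> v \<in> Wf \<and> w \<in> Wf" for v w s
    unfolding Wf_def S_def by (auto intro!: image_eqI[of _ _ "(v,w,s)"])
  have inE: "WE v w s \<noteq> 0 \<Longrightarrow> (v,w,s) \<in> E \<and> v \<in> V \<and> w \<in> V \<and> s \<in> gens B" for v w s
  proof -
    assume "WE v w s \<noteq> 0"
    then have "(v,w,s) \<in> E" using WEE by metis
    then show ?thesis using cg by (auto simp: constraint_graph_def)
  qed
  have rc2: "WV v = (\<Sum>w\<in>V \<inter> Wf. WE v w s) \<and> WV v = (\<Sum>w\<in>V \<inter> Wf. WE w v s)"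
    if "v \<in> V" "s \<in> gens B" for v s
  proof -
    have "(\<Sum>\<^sub>\<infinity>w \<in> V. WE v w s) = (\<Sum>\<^sub>\<infinity>w \<in> V \<inter> Wf. WE v w s)"
      by (rule infsum_cong_neutral) (use inWf[of v _ s] in blast)+
    moreover have "(\<Sum>\<^sub>\<infinity>w \<in> V. WE w v s) = (\<Sum>\<^sub>\<infinity>w \<in> V \<inter> Wf. WE w v s)"
      by (rule infsum_cong_neutral) (use inWf[of _ v s] in blast)+
    ultimately show ?thesis using rc[OF that] fW by simp
  qed
  have le1: "WE v w s \<le> WV v" if "WE v w s \<noteq> 0" for v w s
  proof -
    have "v \<in> V" "w \<in> V \<inter> Wf" "s \<in> gens B" using inE[OF that] inWf[OF that] by auto
    then show ?thesis using rc2[of v s] fW WEnn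
      by (metis member_le_sum finite_Int)
  qed
  have le2: "WE v w s \<le> WV w" if "WE v w s \<noteq> 0" for v w s
  proof -
    have "w \<in> V" "v \<in> V \<inter> Wf" "s \<in> gens B" using inE[OF that] inWf[OF that] by auto
    then show ?thesis using rc2[of w s] fW WEnn
      by (metis member_le_sum finite_Int)
  qed
  show supp: "WE v w s \<noteq> 0 \<Longrightarrow> v \<in> U \<and> w \<in> U \<and> (v,w,s) \<in> E" for v w s
  proof -
    assume ne: "WE v w s \<noteq> 0"
    then have "WE v w s > 0" using WEnn[of v w s] by linarith
    then show ?thesis using le1[OF ne] le2[OF ne] inE[OF ne] by (auto simp: U_def)
  qed
  show "WV v = (\<Sum>w\<in>U. WE v w s) \<and> WV v = (\<Sum>w\<in>U. WE w v s)" if "v \<in> U" "s \<in> gens B" for v s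
  proof -
    have vV: "v \<in> V" using that UV by auto
    have "(\<Sum>\<^sub>\<infinity>w \<in> V. WE v w s) = (\<Sum>\<^sub>\<infinity>w \<in> U. WE v w s)"
      by (rule infsum_cong_neutral) (use supp[of v _ s] UV in blast)+
    moreover have "(\<Sum>\<^sub>\<infinity>w \<in> V. WE w v s) = (\<Sum>\<^sub>\<infinity>w \<in> U. WE w v s)"
      by (rule infsum_cong_neutral) (use supp[of _ v s] UV in blast)+
    ultimately show ?thesis using rc[OF vV that(2)] fU by simp
  qed
qed



lemma sum_row_sel:
  assumes "finite U" "finite B" "v \<in> U" "b \<in> B"
  shows "(\<Sum>t\<in>U\<times>U\<times>B. (if fst t = v \<and> snd (snd t) = b then g t else 0)) = (\<Sum>w\<in>U. g (v,w,b))"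
proof -
  have "(\<Sum>t\<in>U\<times>U\<times>B. (if fst t = v \<and> snd (snd t) = b then g t else 0))
      = sum g {t \<in> U\<times>U\<times>B. fst t = v \<and> snd (snd t) = b}"
    using assms by (simp add: sum.inter_filter)
  also have "{t \<in> U\<times>U\<times>B. fst t = v \<and> snd (snd t) = b} = (\<lambda>w. (v,w,b)) ` U"
    using assms by auto
  also have "sum g \<dots> = (\<Sum>w\<in>U. g (v,w,b))"
    by (subst sum.reindex) (auto simp: inj_on_def)
  finally show ?thesis .
qed

lemma sum_col_sel:
  assumes "finite U" "finite B" "v \<in> U" "b \<in> B"
  shows "(\<Sum>t\<in>U\<times>U\<times>B. (if fst (snd t) = v \<and> snd (snd t) = b then g t else 0)) = (\<Sum>w\<in>U. g (w,v,b))"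
proof -
  have "(\<Sum>t\<in>U\<times>U\<times>B. (if fst (snd t) = v \<and> snd (snd t) = b then g t else 0))
      = sum g {t \<in> U\<times>U\<times>B. fst (snd t) = v \<and> snd (snd t) = b}"
    using assms by (simp add: sum.inter_filter)
  also have "{t \<in> U\<times>U\<times>B. fst (snd t) = v \<and> snd (snd t) = b} = (\<lambda>w. (w,v,b)) ` U"
    using assms by auto
  also have "sum g \<dots> = (\<Sum>w\<in>U. g (w,v,b))"
    by (subst sum.reindex) (auto simp: inj_on_def)
  finally show ?thesis .
qed

lemma core:
  fixes B :: "'b set" and V :: "'v set" and E :: "('v \<times> 'v \<times> 'b letter) set"
    and WV :: "'v \<Rightarrow> real" and WE :: "'v \<Rightarrow> 'v \<Rightarrow> 'b letter \<Rightarrow> real" and v1 :: 'v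
  assumes fB: "finite B"
    and cg: "constraint_graph B V E"
    and w: "is_weight B V E WV WE"
    and fs: "finite_support V WV WE"
    and v1: "v1 \<in> V" and Wv1: "WV v1 > 0"
  shows "\<exists>(\<Omega>::('v \<times> nat) set) \<pi> \<omega>0. finite \<Omega> \<and> \<omega>0 \<in> \<Omega> \<and> fst \<omega>0 = v1 \<and> (\<forall>\<omega>\<in>\<Omega>. fst \<omega> \<in> V) \<and>
     (\<forall>b. bij_betw (\<pi> b) \<Omega> \<Omega>) \<and>
     (\<forall>b\<in>B. \<forall>\<omega>\<in>\<Omega>. (fst \<omega>, fst (\<pi> b \<omega>), (b,True)) \<in> E \<and> (fst (\<pi> b \<omega>), fst \<omega>, (b,False)) \<in> E)"
proof -
  define U where "U = {v \<in> V. WV v \<noteq> 0}"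
  note wf = weight_facts[OF cg w fs, folded U_def]
  have fU: "finite U" and UV: "U \<subseteq> V" and pos: "\<And>v. v \<in> U \<Longrightarrow> WV v > 0"
    and supp: "\<And>v w s. WE v w s \<noteq> 0 \<Longrightarrow> v \<in> U \<and> w \<in> U \<and> (v,w,s) \<in> E"
    and sums: "\<And>v s. v \<in> U \<Longrightarrow> s \<in> gens B \<Longrightarrow> WV v = (\<Sum>w\<in>U. WE v w s) \<and> WV v = (\<Sum>w\<in>U. WE w v s)"
    using wf by blast+
  have WEnn: "\<And>v w s. WE v w s \<ge> 0"
    and sym: "\<And>v w s. s \<in> gens B \<Longrightarrow> WE v w s = WE w v (inv_letter s)"
    using w unfolding is_weight_def by blast+
  have v1U: "v1 \<in> U" using v1 Wv1 by (simp add: U_def)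
  have gB: "b \<in> B \<Longrightarrow> (b, True) \<in> gens B" for b by (simp add: gens_def)
  define T where "T = U \<times> U \<times> B"
  have fT: "finite T" using fU fB by (simp add: T_def)
  define I :: "('v + 'v \<times> 'v \<times> 'b) set" where "I = Inl ` U \<union> Inr ` T"
  have fI: "finite I" using fU fT by (simp add: I_def)
  define x :: "'v + 'v \<times> 'v \<times> 'b \<Rightarrow> real" where
    "x i = (case i of Inl v \<Rightarrow> WV v | Inr t \<Rightarrow> WE (fst t) (fst (snd t)) (snd (snd t), True))" for i
  define rowc :: "'v \<Rightarrow> 'b \<Rightarrow> 'v + 'v \<times> 'v \<times> 'b \<Rightarrow> real" where
    "rowc v b i = (case i of Inl u \<Rightarrow> if u = v then 1 else 0
        | Inr t \<Rightarrow> if fst t = v \<and> snd (snd t) = b then -1 else 0)" for v b i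
  define colc :: "'v \<Rightarrow> 'b \<Rightarrow> 'v + 'v \<times> 'v \<times> 'b \<Rightarrow> real" where
    "colc v b i = (case i of Inl u \<Rightarrow> if u = v then 1 else 0
        | Inr t \<Rightarrow> if fst (snd t) = v \<and> snd (snd t) = b then -1 else 0)" for v b i
  define zc :: "'v \<times> 'v \<times> 'b \<Rightarrow> 'v + 'v \<times> 'v \<times> 'b \<Rightarrow> real" where
    "zc t i = (if i = Inr t then 1 else 0)" for t i
  define Z where "Z = {t \<in> T. x (Inr t) = 0}"
  define EQ where "EQ = (\<lambda>(v,b). rowc v b) ` (U \<times> B) \<union> (\<lambda>(v,b). colc v b) ` (U \<times> B) \<union> zc ` Z"
  have fEQ: "finite EQ" using fU fB fT by (simp add: EQ_def Z_def)
  obtain eqs where eqs: "set eqs = EQ" using finite_list[OF fEQ] by blast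
  have split: "(\<Sum>i\<in>I. f i) = (\<Sum>u\<in>U. f (Inl u)) + (\<Sum>t\<in>T. f (Inr t))" for f :: "_ \<Rightarrow> real"
    unfolding I_def using fU fT
    by (subst sum.union_disjoint) (auto simp: sum.reindex)
  have rowsum: "(\<Sum>i\<in>I. rowc v b i * z i) = z (Inl v) - (\<Sum>w\<in>U. z (Inr (v,w,b)))"
    if "v \<in> U" "b \<in> B" for v b z
  proof -
    have "(\<Sum>t\<in>T. rowc v b (Inr t) * z (Inr t))
        = (\<Sum>t\<in>T. - (if fst t = v \<and> snd (snd t) = b then z (Inr t) else 0))"
      by (rule sum.cong) (auto simp: rowc_def)
    also have "\<dots> = - (\<Sum>t\<in>T. (if fst t = v \<and> snd (snd t) = b then z (Inr t) else 0))"
      by (simp add: sum_negf)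
    also have "\<dots> = - (\<Sum>w\<in>U. z (Inr (v,w,b)))"
      using sum_row_sel[OF fU fB that, of "\<lambda>t. z (Inr t)"] by (simp add: T_def)
    finally have "(\<Sum>t\<in>T. rowc v b (Inr t) * z (Inr t)) = - (\<Sum>w\<in>U. z (Inr (v,w,b)))" .
    moreover have "(\<Sum>u\<in>U. rowc v b (Inl u) * z (Inl u)) = (\<Sum>u\<in>U. if v = u then z (Inl u) else 0)"
      by (rule sum.cong) (auto simp: rowc_def)
    ultimately show ?thesis using that fU by (simp add: split)
  qed
  have colsum: "(\<Sum>i\<in>I. colc v b i * z i) = z (Inl v) - (\<Sum>w\<in>U. z (Inr (w,v,b)))"
    if "v \<in> U" "b \<in> B" for v b z
  proof -
    have "(\<Sum>t\<in>T. colc v b (Inr t) * z (Inr t))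
        = (\<Sum>t\<in>T. - (if fst (snd t) = v \<and> snd (snd t) = b then z (Inr t) else 0))"
      by (rule sum.cong) (auto simp: colc_def)
    also have "\<dots> = - (\<Sum>t\<in>T. (if fst (snd t) = v \<and> snd (snd t) = b then z (Inr t) else 0))"
      by (simp add: sum_negf)
    also have "\<dots> = - (\<Sum>w\<in>U. z (Inr (w,v,b)))"
      using sum_col_sel[OF fU fB that, of "\<lambda>t. z (Inr t)"] by (simp add: T_def)
    finally have "(\<Sum>t\<in>T. colc v b (Inr t) * z (Inr t)) = - (\<Sum>w\<in>U. z (Inr (w,v,b)))" .
    moreover have "(\<Sum>u\<in>U. colc v b (Inl u) * z (Inl u)) = (\<Sum>u\<in>U. if v = u then z (Inl u) else 0)"
      by (rule sum.cong) (auto simp: colc_def)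
    ultimately show ?thesis using that fU by (simp add: split)
  qed
  have zsum: "(\<Sum>i\<in>I. zc t i * z i) = z (Inr t)" if "t \<in> T" for t z
  proof -
    have "(\<Sum>i\<in>I. zc t i * z i) = (\<Sum>i\<in>I. if Inr t = i then z i else 0)"
      by (rule sum.cong) (auto simp: zc_def)
    then show ?thesis using that fI by (simp add: I_def)
  qed
  have EQrat: "\<forall>c\<in>set eqs. \<forall>i. c i \<in> \<rat>"
    unfolding eqs EQ_def by (auto simp: rowc_def colc_def zc_def split: sum.splits)
  have EQx: "\<forall>c\<in>set eqs. (\<Sum>i\<in>I. c i * x i) = 0"
    unfolding eqs EQ_def
    using sums gB by (auto simp: rowsum colsum zsum Z_def x_def)
  define P where "P = {i \<in> I. x i > 0}"
  have Inl1: "Inl v1 \<in> P" using v1U Wv1 by (simp add: P_def I_def x_def)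
  have fP: "finite P" using fI by (simp add: P_def)
  define \<epsilon> where "\<epsilon> = Min (x ` P)"
  have eps: "\<epsilon> > 0" unfolding \<epsilon>_def using Inl1 fP by (subst Min_gr_iff) (auto simp: P_def)
  have epsle: "\<And>i. i \<in> P \<Longrightarrow> \<epsilon> \<le> x i" using fP by (simp add: \<epsilon>_def)
  obtain y where yR: "\<forall>i. y i \<in> \<rat>" and yeq: "\<forall>c\<in>set eqs. (\<Sum>i\<in>I. c i * y i) = 0"
    and ycl: "\<forall>i\<in>I. \<bar>y i - x i\<bar> < \<epsilon>"
    using rat_approx_n[OF fI refl EQrat EQx eps] by blast
  have ypos: "y i > 0" if "i \<in> P" for i
    using ycl epsle[OF that] that by (force simp: P_def abs_less_iff)
  have yzero: "y (Inr t) = 0" if "t \<in> T" "x (Inr t) = 0" for t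
  proof -
    have "zc t \<in> set eqs" using that by (simp add: eqs EQ_def Z_def)
    then show ?thesis using yeq zsum[OF that(1)] by auto
  qed
  have xnn: "x i \<ge> 0" if "i \<in> I" for i
    using that pos WEnn by (auto simp: I_def x_def less_imp_le)
  have ynn: "y i \<ge> 0" if iI: "i \<in> I" for i
  proof (cases "x i > 0")
    case True then show ?thesis using ypos that by (force simp: P_def)
  next
    case False
    then have "x i = 0" using xnn[OF that] by simp
    moreover obtain t where "i = Inr t" "t \<in> T"
      using iI \<open>x i = 0\<close> pos by (force simp: I_def x_def)
    ultimately show ?thesis using yzero by simp
  qed
  obtain D :: nat where D: "D > 0" "\<forall>i\<in>I. real D * y i \<in> \<int>"
    using common_denom[OF fI, of y] yR by blast
  define n where "n v = nat \<lfloor>real D * y (Inl v)\<rfloor>" for v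
  define N where "N b v w = nat \<lfloor>real D * y (Inr (v,w,b))\<rfloor>" for b v w
  have rn: "real (n v) = real D * y (Inl v)" if "v \<in> U" for v
    unfolding n_def using that D ynn by (intro nat_floor_Ints) (auto simp: I_def)
  have rN: "real (N b v w) = real D * y (Inr (v,w,b))" if "v \<in> U" "w \<in> U" "b \<in> B" for b v w
    unfolding N_def using that D ynn by (intro nat_floor_Ints) (auto simp: I_def T_def)
  have row: "(\<Sum>w\<in>U. N b v w) = n v" if "v \<in> U" "b \<in> B" for v b
  proof -
    have "rowc v b \<in> set eqs" using that by (auto simp: eqs EQ_def)
    then have "y (Inl v) = (\<Sum>w\<in>U. y (Inr (v,w,b)))" using yeq rowsum[OF that] by auto
    then have "real (\<Sum>w\<in>U. N b v w) = real (n v)"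
      using that by (simp add: rN rn sum_distrib_left)
    then show ?thesis by linarith
  qed
  have col: "(\<Sum>w\<in>U. N b w v) = n v" if "v \<in> U" "b \<in> B" for v b
  proof -
    have "colc v b \<in> set eqs" using that by (auto simp: eqs EQ_def)
    then have "y (Inl v) = (\<Sum>w\<in>U. y (Inr (w,v,b)))" using yeq colsum[OF that] by auto
    then have "real (\<Sum>w\<in>U. N b w v) = real (n v)"
      using that by (simp add: rN rn sum_distrib_left)
    then show ?thesis by linarith
  qed
  define \<Omega> where "\<Omega> = Sigma U (\<lambda>v. {..<n v})"
  have "\<forall>b. \<exists>\<pi>. bij_betw \<pi> \<Omega> \<Omega> \<and> (b \<in> B \<longrightarrow> (\<forall>\<omega>\<in>\<Omega>. N b (fst \<omega>) (fst (\<pi> \<omega>)) > 0))"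
  proof
    fix b
    show "\<exists>\<pi>. bij_betw \<pi> \<Omega> \<Omega> \<and> (b \<in> B \<longrightarrow> (\<forall>\<omega>\<in>\<Omega>. N b (fst \<omega>) (fst (\<pi> \<omega>)) > 0))"
    proof (cases "b \<in> B")
      case True
      then show ?thesis
        using perm_from_counts[OF fU, of "N b" n] row col unfolding \<Omega>_def by blast
    next
      case False
      then show ?thesis by (intro exI[of _ id]) auto
    qed
  qed
  then obtain \<pi> where \<pi>: "\<And>b. bij_betw (\<pi> b) \<Omega> \<Omega>"
    "\<And>b \<omega>. b \<in> B \<Longrightarrow> \<omega> \<in> \<Omega> \<Longrightarrow> N b (fst \<omega>) (fst (\<pi> b \<omega>)) > 0"
    by metis
  have n1: "n v1 > 0"
  proof -
    have "real (n v1) > 0" using rn[OF v1U] ypos[OF Inl1] D by simp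
    then show ?thesis by simp
  qed
  have edges: "(fst \<omega>, fst (\<pi> b \<omega>), (b,True)) \<in> E \<and> (fst (\<pi> b \<omega>), fst \<omega>, (b,False)) \<in> E"
    if b: "b \<in> B" and om: "\<omega> \<in> \<Omega>" for b \<omega>
  proof -
    define v where "v = fst \<omega>"
    define w' where "w' = fst (\<pi> b \<omega>)"
    have "\<pi> b \<omega> \<in> \<Omega>" using \<pi>(1)[of b] om by (auto simp: bij_betw_def)
    then have vU: "v \<in> U" and wU: "w' \<in> U" using om by (auto simp: \<Omega>_def v_def w'_def)
    have Npos: "N b v w' > 0" using \<pi>(2)[OF b om] by (simp add: v_def w'_def)
    have tT: "(v,w',b) \<in> T" using vU wU b by (simp add: T_def)
    have "y (Inr (v,w',b)) \<noteq> 0" using Npos by (auto simp: N_def)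
    then have "x (Inr (v,w',b)) \<noteq> 0" using yzero[OF tT] by auto
    then have ne: "WE v w' (b,True) \<noteq> 0" by (simp add: x_def)
    have "WE w' v (b,False) = WE v w' (b,True)"
      using sym[OF gB[OF b], of v w'] by (simp add: inv_letter_def)
    then have "WE w' v (b,False) \<noteq> 0" using ne by simp
    then show ?thesis using supp ne by (auto simp: v_def w'_def)
  qed
  show ?thesis
    apply (intro exI[of _ \<Omega>] exI[of _ \<pi>] exI[of _ "(v1, 0)"])
    using fU n1 v1U UV \<pi>(1) edges by (auto simp: \<Omega>_def)
qed



lemma fg_inv_append: "fg_inv (u @ v) = fg_inv v @ fg_inv u"
  by (simp add: fg_inv_def)

lemma set_fg_inv: "set (fg_inv w) = inv_letter ` set w"
  by (simp add: fg_inv_def)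

lemma inv_letter_gens: "s \<in> gens B \<Longrightarrow> inv_letter s \<in> gens B"
  by (auto simp: gens_def inv_letter_def)

lemma assemble:
  fixes B :: "'b set" and V :: "'v set" and E :: "('v \<times> 'v \<times> 'b letter) set"
    and \<Omega> :: "'o set" and L :: "'o \<Rightarrow> 'v"
  assumes fin: "finite \<Omega>" and w0: "\<omega>0 \<in> \<Omega>" and Lw0: "L \<omega>0 = v1"
    and inV: "\<forall>\<omega>\<in>\<Omega>. L \<omega> \<in> V"
    and bij: "\<forall>b. bij_betw (\<pi> b) \<Omega> \<Omega>"
    and edges: "\<forall>b\<in>B. \<forall>\<omega>\<in>\<Omega>. (L \<omega>, L (\<pi> b \<omega>), (b,True)) \<in> E \<and> (L (\<pi> b \<omega>), L \<omega>, (b,False)) \<in> E"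
  shows "\<exists>x \<in> graph_subshift B V E. periodic B x \<and> x [] = v1"
proof -
  interpret perms \<pi> \<Omega> using bij by unfold_locales auto
  define x where "x = (\<lambda>f. L (act \<pi> \<Omega> \<omega>0 f))"
  let ?G = "free_group B"
  have xmult: "x (fg_mult f g) = L (act \<pi> \<Omega> (act \<pi> \<Omega> \<omega>0 f) g)" for f g
    by (simp add: x_def fg_mult_def act_reduce w0 act_append)
  have sub: "x \<in> graph_subshift B V E"
    unfolding graph_subshift_def
  proof (intro CollectI conjI ballI)
    fix f assume "f \<in> carrier ?G"
    show "x f \<in> V" using inV act_in w0 by (simp add: x_def)
  next
    fix f s assume f: "f \<in> carrier ?G" and s: "s \<in> gens B"
    define \<omega> where "\<omega> = act \<pi> \<Omega> \<omega>0 f"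
    have om: "\<omega> \<in> \<Omega>" using act_in w0 by (simp add: \<omega>_def)
    obtain b bo where sb: "s = (b, bo)" and b: "b \<in> B" using s by (auto simp: gens_def)
    have xs: "x (fg_mult f [s]) = L (stp \<pi> \<Omega> s \<omega>)" by (simp add: xmult \<omega>_def)
    have xf: "x f = L \<omega>" by (simp add: x_def \<omega>_def)
    show "(x f, x (fg_mult f [s]), s) \<in> E"
    proof (cases bo)
      case True
      then show ?thesis unfolding xs xf using edges b om by (simp add: sb stp_def)
    next
      case False
      define \<omega>' where "\<omega>' = inv_into \<Omega> (\<pi> b) \<omega>"
      have "\<omega>' \<in> \<Omega>" "\<pi> b \<omega>' = \<omega>"
        using bij[rule_format, of b] om unfolding \<omega>'_def bij_betw_def
        by (auto intro: inv_into_into f_inv_into_f)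
      then show ?thesis unfolding xs xf using edges b False
        by (auto simp: sb stp_def \<omega>'_def[symmetric])
    qed
  qed
  define H where "H = stabilizer B x"
  define \<phi> where "\<phi> a = restrict (\<lambda>\<omega>. act \<pi> \<Omega> \<omega> a) \<Omega>" for a
  have shiftx: "shift h x g = L (act \<pi> \<Omega> (act \<pi> \<Omega> \<omega>0 (fg_inv h)) g)" for h g
    by (simp add: shift_def xmult)
  have key: "H #>\<^bsub>?G\<^esub> a \<subseteq> H #>\<^bsub>?G\<^esub> a'"
    if a: "a \<in> carrier ?G" and a': "a' \<in> carrier ?G" and eq: "\<phi> a = \<phi> a'" for a a'
  proof
    fix z assume "z \<in> H #>\<^bsub>?G\<^esub> a"
    then obtain h0 where h0: "h0 \<in> H" and z: "z = fg_mult h0 a"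
      by (auto simp: r_coset_def free_group_def)
    define h' where "h' = fg_mult (fg_mult h0 a) (fg_inv a')"
    have h0c: "h0 \<in> carrier ?G" using h0 by (simp add: H_def stabilizer_def)
    have a'red: "reduced a'" using a' by (simp add: free_group_def)
    have "set h' \<subseteq> set h0 \<union> set a \<union> set (fg_inv a')"
      unfolding h'_def fg_mult_def
      using set_reduce[of "reduce (h0 @ a) @ fg_inv a'"] set_reduce[of "h0 @ a"] by auto
    moreover have "set (fg_inv a') \<subseteq> gens B" using a' by (auto simp: set_fg_inv free_group_def inv_letter_gens)
    ultimately have h'c: "h' \<in> carrier ?G"
      using a h0c by (auto simp: free_group_def h'_def fg_mult_def reduced_reduce)
    have aa': "act \<pi> \<Omega> \<omega>0 a' = act \<pi> \<Omega> \<omega>0 a"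
      using fun_cong[OF eq, of \<omega>0] w0 by (simp add: \<phi>_def)
    have "act \<pi> \<Omega> \<omega>0 (fg_inv h') = act \<pi> \<Omega> \<omega>0 (fg_inv (reduce (h0 @ a) @ fg_inv a'))"
      by (simp add: h'_def fg_mult_def act_inv_reduce w0)
    also have "\<dots> = act \<pi> \<Omega> (act \<pi> \<Omega> \<omega>0 a') (fg_inv (reduce (h0 @ a)))"
      by (simp add: fg_inv_append act_append)
    also have "\<dots> = act \<pi> \<Omega> (act \<pi> \<Omega> \<omega>0 a') (fg_inv (h0 @ a))"
      by (simp add: act_inv_reduce act_in w0)
    also have "\<dots> = act \<pi> \<Omega> \<omega>0 (fg_inv h0)"
      by (simp add: aa' fg_inv_append act_append act_inv w0)
    finally have inv_eq: "act \<pi> \<Omega> \<omega>0 (fg_inv h') = act \<pi> \<Omega> \<omega>0 (fg_inv h0)" .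
    have "h' \<in> H"
      using h0 h'c by (simp add: H_def stabilizer_def shiftx inv_eq)
    moreover have "fg_mult h' a' = z" using mult_cancel[OF a'red] by (simp add: h'_def z)
    ultimately show "z \<in> H #>\<^bsub>?G\<^esub> a'" by (auto simp: r_coset_def free_group_def)
  qed
  have rc: "rcosets\<^bsub>?G\<^esub> H = (\<lambda>t. H #>\<^bsub>?G\<^esub> inv_into (carrier ?G) \<phi> t) ` (\<phi> ` carrier ?G)"
  proof -
    have "H #>\<^bsub>?G\<^esub> a = H #>\<^bsub>?G\<^esub> inv_into (carrier ?G) \<phi> (\<phi> a)" if "a \<in> carrier ?G" for a
    proof -
      have "inv_into (carrier ?G) \<phi> (\<phi> a) \<in> carrier ?G" "\<phi> (inv_into (carrier ?G) \<phi> (\<phi> a)) = \<phi> a"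
        using that by (auto intro: inv_into_into f_inv_into_f)
      then show ?thesis using key that by (metis subset_antisym)
    qed
    then show ?thesis unfolding RCOSETS_def by auto
  qed
  have "\<phi> ` carrier ?G \<subseteq> PiE \<Omega> (\<lambda>_. \<Omega>)" using act_in by (auto simp: \<phi>_def)
  then have "finite (\<phi> ` carrier ?G)" by (rule finite_subset[OF _ finite_PiE]) (use fin in auto)
  then have "periodic B x" unfolding periodic_def H_def[symmetric] rc by simp
  then show ?thesis using sub Lw0 by (auto simp: x_def)
qed


theorem lemma2p2:
  fixes B :: "'b set" and V :: "'v set" and E :: "('v \<times> 'v \<times> 'b letter) set"
    and WV :: "'v \<Rightarrow> real" and WE :: "'v \<Rightarrow> 'v \<Rightarrow> 'b letter \<Rightarrow> real" and v1 :: 'v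
  assumes "finite B"
    and "constraint_graph B V E"
    and "is_weight B V E WV WE"
    and "finite_support V WV WE"
    and "v1 \<in> V" and "WV v1 > 0"
  shows "\<exists>x \<in> graph_subshift B V E. periodic B x \<and> x [] = v1"
proof -
  obtain \<Omega> :: "('v \<times> nat) set" and \<pi> \<omega>0 where
    "finite \<Omega>" "\<omega>0 \<in> \<Omega>" "fst \<omega>0 = v1" "\<forall>\<omega>\<in>\<Omega>. fst \<omega> \<in> V" "\<forall>b. bij_betw (\<pi> b) \<Omega> \<Omega>"
    "\<forall>b\<in>B. \<forall>\<omega>\<in>\<Omega>. (fst \<omega>, fst (\<pi> b \<omega>), (b,True)) \<in> E \<and> (fst (\<pi> b \<omega>), fst \<omega>, (b,False)) \<in> E"
    using core[OF assms] by blast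
  then show ?thesis by (rule assemble)
qed

end
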